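(* There exist a finite structure $\mathcal{A}$ and an $\omega$-categorical structure $\mathcal{B}$ over the same finite relational signature such that $\Pi_2\text{-}\mathrm{CSP}(\mathcal{A}) \subseteq \Pi_2\text{-}\mathrm{CSP}(\mathcal{B})$ but $\mathrm{QCSP}(\mathcal{A}) \not\subseteq \mathrm{QCSP}(\mathcal{B})$.
   Context: A countably infinite structure is $\omega$-categorical if it is, up to isomorphism, the unique countable model of its first-order theory. A positive Horn (pH) sentence is a first-order sentence built from atoms (relational and equalities) using only $\exists,\forall,\wedge$. $\mathrm{QCSP}(\mathcal{A})$ is the set of pH sentences true in $\mathcal{A}$, and $\Pi_2\text{-}\mathrm{CSP}(\mathcal{A})$ is the set of pH sentences of the form $\forall\bar x\exists\bar y\,P$ ($P$ a conjunction of atoms) true in $\mathcal{A}$. *)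

theory Defs
  imports Main "HOL-Library.Countable_Set"
begin

text \<open>A relational signature assigns to (some) relation symbols, coded as naturals,
  an arity. It is finite iff its domain is finite.\<close>
type_synonym signature = "nat \<Rightarrow> nat option"

record 'a struc =
  univ :: "'a set"
  rel :: "nat \<Rightarrow> 'a list \<Rightarrow> bool"

definition is_struc :: "signature \<Rightarrow> 'a struc \<Rightarrow> bool" where
  "is_struc \<sigma> M \<longleftrightarrow> univ M \<noteq> {} \<and>
     (\<forall>r xs. rel M r xs \<longrightarrow> \<sigma> r = Some (length xs) \<and> set xs \<subseteq> univ M)"

datatype fm =
    Atom nat "nat list"
  | Eq nat nat
  | Neg fm
  | Conj fm fm
  | Disj fm fm
  | Ex nat fm
  | All nat fm

fun fv :: "fm \<Rightarrow> nat set" where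
  "fv (Atom r xs) = set xs"
| "fv (Eq x y) = {x, y}"
| "fv (Neg \<phi>) = fv \<phi>"
| "fv (Conj \<phi> \<psi>) = fv \<phi> \<union> fv \<psi>"
| "fv (Disj \<phi> \<psi>) = fv \<phi> \<union> fv \<psi>"
| "fv (Ex x \<phi>) = fv \<phi> - {x}"
| "fv (All x \<phi>) = fv \<phi> - {x}"

fun wf_fm :: "signature \<Rightarrow> fm \<Rightarrow> bool" where
  "wf_fm \<sigma> (Atom r xs) = (\<sigma> r = Some (length xs))"
| "wf_fm \<sigma> (Eq x y) = True"
| "wf_fm \<sigma> (Neg \<phi>) = wf_fm \<sigma> \<phi>"
| "wf_fm \<sigma> (Conj \<phi> \<psi>) = (wf_fm \<sigma> \<phi> \<and> wf_fm \<sigma> \<psi>)"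
| "wf_fm \<sigma> (Disj \<phi> \<psi>) = (wf_fm \<sigma> \<phi> \<and> wf_fm \<sigma> \<psi>)"
| "wf_fm \<sigma> (Ex x \<phi>) = wf_fm \<sigma> \<phi>"
| "wf_fm \<sigma> (All x \<phi>) = wf_fm \<sigma> \<phi>"

definition sentence :: "signature \<Rightarrow> fm \<Rightarrow> bool" where
  "sentence \<sigma> \<phi> \<longleftrightarrow> wf_fm \<sigma> \<phi> \<and> fv \<phi> = {}"

fun sat :: "'a struc \<Rightarrow> (nat \<Rightarrow> 'a) \<Rightarrow> fm \<Rightarrow> bool" where
  "sat M e (Atom r xs) = rel M r (map e xs)"
| "sat M e (Eq x y) = (e x = e y)"
| "sat M e (Neg \<phi>) = (\<not> sat M e \<phi>)"
| "sat M e (Conj \<phi> \<psi>) = (sat M e \<phi> \<and> sat M e \<psi>)"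
| "sat M e (Disj \<phi> \<psi>) = (sat M e \<phi> \<or> sat M e \<psi>)"
| "sat M e (Ex x \<phi>) = (\<exists>a\<in>univ M. sat M (e(x := a)) \<phi>)"
| "sat M e (All x \<phi>) = (\<forall>a\<in>univ M. sat M (e(x := a)) \<phi>)"

definition holds :: "'a struc \<Rightarrow> fm \<Rightarrow> bool" where
  "holds M \<phi> \<longleftrightarrow> (\<forall>e. (\<forall>x. e x \<in> univ M) \<longrightarrow> sat M e \<phi>)"

definition iso :: "signature \<Rightarrow> 'a struc \<Rightarrow> 'b struc \<Rightarrow> bool" where
  "iso \<sigma> M N \<longleftrightarrow> (\<exists>h. bij_betw h (univ M) (univ N) \<and>
     (\<forall>r n xs. \<sigma> r = Some n \<longrightarrow> length xs = n \<longrightarrow> set xs \<subseteq> univ M \<longrightarrow>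
        (rel M r xs \<longleftrightarrow> rel N r (map h xs))))"

text \<open>Countable structures are represented (up to isomorphism) on subsets of nat.\<close>
definition omega_categorical :: "signature \<Rightarrow> 'a struc \<Rightarrow> bool" where
  "omega_categorical \<sigma> B \<longleftrightarrow>
     is_struc \<sigma> B \<and> countable (univ B) \<and> infinite (univ B) \<and>
     (\<forall>M :: nat struc. is_struc \<sigma> M \<and>
        (\<forall>\<phi>. sentence \<sigma> \<phi> \<longrightarrow> holds B \<phi> \<longrightarrow> holds M \<phi>) \<longrightarrow> iso \<sigma> M B)"

inductive pH :: "fm \<Rightarrow> bool" where
  "pH (Atom r xs)"
| "pH (Eq x y)"
| "pH \<phi> \<Longrightarrow> pH \<psi> \<Longrightarrow> pH (Conj \<phi> \<psi>)"
| "pH \<phi> \<Longrightarrow> pH (Ex x \<phi>)"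
| "pH \<phi> \<Longrightarrow> pH (All x \<phi>)"

inductive conj_atoms :: "fm \<Rightarrow> bool" where
  "conj_atoms (Atom r xs)"
| "conj_atoms (Eq x y)"
| "conj_atoms \<phi> \<Longrightarrow> conj_atoms \<psi> \<Longrightarrow> conj_atoms (Conj \<phi> \<psi>)"

inductive ex_block :: "fm \<Rightarrow> bool" where
  "conj_atoms \<phi> \<Longrightarrow> ex_block \<phi>"
| "ex_block \<phi> \<Longrightarrow> ex_block (Ex y \<phi>)"

inductive pi2_form :: "fm \<Rightarrow> bool" where
  "ex_block \<phi> \<Longrightarrow> pi2_form \<phi>"
| "pi2_form \<phi> \<Longrightarrow> pi2_form (All x \<phi>)"

definition QCSP :: "signature \<Rightarrow> 'a struc \<Rightarrow> fm set" where
  "QCSP \<sigma> A = {\<phi>. sentence \<sigma> \<phi> \<and> pH \<phi> \<and> holds A \<phi>}"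

definition Pi2_CSP :: "signature \<Rightarrow> 'a struc \<Rightarrow> fm set" where
  "Pi2_CSP \<sigma> A = {\<phi>. sentence \<sigma> \<phi> \<and> pi2_form \<phi> \<and> holds A \<phi>}"

end

theory Submission
  imports Defs
begin

definition sig0 :: signature where "sig0 = (\<lambda>r. if r = 0 then Some 2 else None)"

definition A0 :: "nat struc" where
  "A0 = \<lparr>univ = {0,1}, rel = (\<lambda>r xs. r = 0 \<and> (\<exists>z. z \<le> 1 \<and> xs = [0,z]))\<rparr>"

definition B0 :: "nat struc" where
  "B0 = \<lparr>univ = UNIV, rel = (\<lambda>r xs. r = 0 \<and> (\<exists>y z. xs = [y,z] \<and> (y = z \<or> y div 2 \<noteq> z div 2)))\<rparr>"

lemma sat_cong: "(\<forall>x\<in>fv \<phi>. e1 x = e2 x) \<Longrightarrow> sat M e1 \<phi> = sat M e2 \<phi>"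
proof (induction \<phi> arbitrary: e1 e2)
  case (Atom r xs)
  then have "map e1 xs = map e2 xs" by (simp add: map_eq_conv)
  then show ?case by (simp only: sat.simps)
next
  case (Ex x \<phi>)
  have "\<And>a. sat M (e1(x:=a)) \<phi> = sat M (e2(x:=a)) \<phi>"
    by (rule Ex.IH) (use Ex.prems in auto)
  then show ?case by simp
next
  case (All x \<phi>)
  have "\<And>a. sat M (e1(x:=a)) \<phi> = sat M (e2(x:=a)) \<phi>"
    by (rule All.IH) (use All.prems in auto)
  then show ?case by simp
next
  case (Conj a b)
  have "sat M e1 a = sat M e2 a" "sat M e1 b = sat M e2 b"
    by (rule Conj.IH; use Conj.prems in auto)+
  then show ?case by simp
next
  case (Disj a b)
  have "sat M e1 a = sat M e2 a" "sat M e1 b = sat M e2 b"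
    by (rule Disj.IH; use Disj.prems in auto)+
  then show ?case by simp
qed auto

lemma finite_fv: "finite (fv \<phi>)"
  by (induction \<phi>) auto

lemma prod_conj:
  assumes "conj_atoms \<psi>" "\<forall>i\<in>I. sat A (E i) \<psi>"
    and hom: "\<forall>r vs. (\<forall>i\<in>I. rel A r (map (\<lambda>v. v i) vs)) \<longrightarrow> rel B r (map H vs)"
    and eqH: "\<forall>v w. (\<forall>i\<in>I. v i = w i) \<longrightarrow> H v = H w"
  shows "sat B (\<lambda>x. H (\<lambda>i. E i x)) \<psi>"
  using assms(1,2)
proof (induction \<psi>)
  case (1 r xs)
  have "\<forall>i\<in>I. rel A r (map (\<lambda>v. v i) (map (\<lambda>x i. E i x) xs))"
    using 1 by (simp add: comp_def)
  then have "rel B r (map H (map (\<lambda>x i. E i x) xs))" using hom by blast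
  then show ?case by (simp add: comp_def)
next
  case (2 x y)
  then show ?case using eqH by simp
next
  case (3 \<phi> \<psi>)
  then show ?case by simp
qed

lemma prod_ex:
  assumes "ex_block \<psi>" "\<forall>i\<in>I. sat A (E i) \<psi>"
    and hom: "\<forall>r vs. (\<forall>i\<in>I. rel A r (map (\<lambda>v. v i) vs)) \<longrightarrow> rel B r (map H vs)"
    and eqH: "\<forall>v w. (\<forall>i\<in>I. v i = w i) \<longrightarrow> H v = H w"
    and univH: "\<forall>v. H v \<in> univ B"
  shows "sat B (\<lambda>x. H (\<lambda>i. E i x)) \<psi>"
  using assms(1,2)
proof (induction \<psi> arbitrary: E)
  case (1 \<phi>)
  then show ?case using prod_conj[OF _ _ hom eqH] by blast
next
  case (2 \<phi> y)
  from 2(3) have "\<forall>i\<in>I. \<exists>a. sat A ((E i)(y:=a)) \<phi>" by auto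
  then obtain a where a: "\<forall>i\<in>I. sat A ((E i)(y:=a i)) \<phi>" by metis
  have "sat B (\<lambda>x. H (\<lambda>i. ((E i)(y:=a i)) x)) \<phi>"
    using 2(2)[of "\<lambda>i. (E i)(y:=a i)"] a by blast
  moreover have "(\<lambda>x. H (\<lambda>i. ((E i)(y:=a i)) x)) = (\<lambda>x. H (\<lambda>i. E i x))(y := H a)"
    by (rule ext) auto
  ultimately show ?case using univH by auto
qed

lemma char_unique:
  assumes "b \<in> I" "b' \<in> I" "\<forall>i\<in>I. v i = (if i = b then 1 else (0::nat))"
    "\<forall>i\<in>I. v i = (if i = b' then 1 else (0::nat))"
  shows "b = b'"
  using assms by (metis zero_neq_one)

lemma ex_transfer:
  assumes "ex_block \<psi>" "\<forall>e'. (\<forall>x. e' x \<in> univ A0) \<longrightarrow> sat A0 e' \<psi>"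
  shows "sat B0 e \<psi>"
proof -
  define I where "I = insert 0 (e ` fv \<psi>)"
  have finI: "finite I" unfolding I_def using finite_fv by auto
  define c where "c = 2 * Suc (Max I)"
  define ch where "ch = (\<lambda>v b. b \<in> I \<and> (\<forall>i\<in>I. v i = (if i = b then 1 else (0::nat))))"
  define H where "H = (\<lambda>v. if \<exists>b. ch v b then (THE b. ch v b) else c)"
  define E where "E = (\<lambda>i v. if e v = i then 1 else (0::nat))"
  have Hch: "H v = b" if "ch v b" for v b
  proof -
    have "\<And>b'. ch v b' \<Longrightarrow> b' = b" using that unfolding ch_def by (metis zero_neq_one)
    then have "(THE b. ch v b) = b" using that by (rule the_equality[rotated])
    then show ?thesis unfolding H_def using that by auto
  qed
  have Hnch: "H v = c" if "\<not> (\<exists>b. ch v b)" for v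
    unfolding H_def using that by auto
  have Hcases: "H v = c \<or> H v \<in> I" for v
    by (metis Hch Hnch ch_def)
  have cI: "c div 2 \<noteq> b div 2" if "b \<in> I" for b
  proof -
    have "b \<le> Max I" using finI that by auto
    then show ?thesis unfolding c_def by auto
  qed
  have "\<forall>i\<in>I. sat A0 (E i) \<psi>"
    using assms(2) unfolding E_def A0_def by auto
  moreover have hom: "\<forall>r vs. (\<forall>i\<in>I. rel A0 r (map (\<lambda>v. v i) vs)) \<longrightarrow> rel B0 r (map H vs)"
  proof (intro allI impI)
    fix r vs assume h: "\<forall>i\<in>I. rel A0 r (map (\<lambda>v. v i) vs)"
    have "0 \<in> I" unfolding I_def by auto
    with h have r0: "r = 0" and "\<exists>z. map (\<lambda>v. v 0) vs = [0, z]" unfolding A0_def by auto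
    then obtain p q where vs: "vs = [p,q]" by auto
    have "\<forall>i\<in>I. p i = 0" using h unfolding vs A0_def by auto
    then have "\<not> (\<exists>b. ch p b)" unfolding ch_def by fastforce
    then have Hp: "H p = c" by (rule Hnch)
    have "H p = H q \<or> H p div 2 \<noteq> H q div 2"
    proof (cases "H q = c")
      case True then show ?thesis using Hp by simp
    next
      case False
      then have "H q \<in> I" using Hcases[of q] by simp
      then have "c div 2 \<noteq> H q div 2" by (rule cI)
      then show ?thesis using Hp by simp
    qed
    then show "rel B0 r (map H vs)"
      unfolding B0_def vs r0 by simp
  qed
  moreover have "\<forall>v w. (\<forall>i\<in>I. v i = w i) \<longrightarrow> H v = H w"
  proof (intro allI impI)
    fix v w :: "nat \<Rightarrow> nat" assume vw: "\<forall>i\<in>I. v i = w i"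
    then have "ch v = ch w" unfolding ch_def by (auto intro!: ext)
    then show "H v = H w" by (simp only: H_def)
  qed
  moreover have "\<forall>v. H v \<in> univ B0" unfolding B0_def by simp
  ultimately have "sat B0 (\<lambda>x. H (\<lambda>i. E i x)) \<psi>"
    using prod_ex[OF assms(1)] by blast
  moreover have "\<forall>x\<in>fv \<psi>. H (\<lambda>i. E i x) = e x"
  proof
    fix x assume "x \<in> fv \<psi>"
    then have "ch (\<lambda>i. E i x) (e x)" unfolding ch_def E_def I_def by auto
    then show "H (\<lambda>i. E i x) = e x" by (rule Hch)
  qed
  ultimately show ?thesis using sat_cong[of \<psi> "\<lambda>x. H (\<lambda>i. E i x)" e] by auto
qed

lemma pi2_transfer:
  assumes "pi2_form \<phi>" "\<forall>e'. (\<forall>x. e' x \<in> univ A0) \<longrightarrow> sat A0 e' \<phi>"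
  shows "sat B0 e \<phi>"
  using assms
proof (induction \<phi> arbitrary: e)
  case (1 \<phi>)
  then show ?case using ex_transfer by blast
next
  case (2 \<phi> x)
  have "\<forall>e'. (\<forall>y. e' y \<in> univ A0) \<longrightarrow> sat A0 e' \<phi>"
  proof (intro allI impI)
    fix e' :: "nat \<Rightarrow> nat" assume e': "\<forall>y. e' y \<in> univ A0"
    have "\<forall>a\<in>univ A0. sat A0 (e'(x:=a)) \<phi>" using 2(3) e' by simp
    then have "sat A0 (e'(x := e' x)) \<phi>" using e' by blast
    then show "sat A0 e' \<phi>" by simp
  qed
  then show ?case using 2(2) by auto
qed

lemma pi2_incl: "Pi2_CSP sig0 A0 \<subseteq> Pi2_CSP sig0 B0"
  unfolding Pi2_CSP_def holds_def using pi2_transfer by blast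

definition phi0 :: fm where "phi0 = Ex 0 (All 1 (Atom 0 [0,1]))"

lemma partner: "(a::nat) \<noteq> (if even a then a+1 else a-1) \<and> a div 2 = (if even a then a+1 else a-1) div 2"
  by (cases "even a") (auto elim!: evenE oddE)

lemma qcsp_not: "\<not> QCSP sig0 A0 \<subseteq> QCSP sig0 B0"
proof
  assume h: "QCSP sig0 A0 \<subseteq> QCSP sig0 B0"
  have s: "sentence sig0 phi0" unfolding sentence_def phi0_def sig0_def by auto
  have "pH phi0" unfolding phi0_def by (intro pH.intros)
  moreover have "holds A0 phi0" unfolding holds_def phi0_def A0_def by auto
  ultimately have "phi0 \<in> QCSP sig0 A0" using s unfolding QCSP_def by auto
  with h have "holds B0 phi0" unfolding QCSP_def by auto
  then have "sat B0 (\<lambda>_. 0) phi0" unfolding holds_def B0_def by auto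
  then obtain a :: nat where "\<forall>z. a = z \<or> a div 2 \<noteq> z div 2" unfolding phi0_def B0_def by auto
  then have "a = (if even a then a+1 else a-1) \<or> a div 2 \<noteq> (if even a then a+1 else a-1) div 2"
    by blast
  then show False using partner[of a] by blast
qed

fun nd :: "nat \<Rightarrow> nat \<Rightarrow> fm" where
  "nd k 0 = Eq k k"
| "nd k (Suc j) = Conj (Neg (Eq k j)) (nd k j)"

fun alld :: "nat \<Rightarrow> fm" where
  "alld 0 = Eq 0 0"
| "alld (Suc n) = Conj (nd n n) (alld n)"

fun exs :: "nat \<Rightarrow> fm \<Rightarrow> fm" where
  "exs 0 \<phi> = \<phi>"
| "exs (Suc n) \<phi> = Ex n (exs n \<phi>)"

lemma sat_nd: "sat M e (nd k j) \<longleftrightarrow> (\<forall>i<j. e k \<noteq> e i)"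
  by (induction j) (auto simp: less_Suc_eq)

lemma sat_alld: "sat M e (alld n) \<longleftrightarrow> (\<forall>k<n. \<forall>i<k. e k \<noteq> e i)"
  by (induction n) (auto simp: sat_nd less_Suc_eq)

lemma fv_nd: "fv (nd k j) \<subseteq> insert k {..<j}"
  by (induction j) auto

lemma fv_alld: "fv (alld n) \<subseteq> {..n}"
proof (induction n)
  case 0 then show ?case by simp
next
  case (Suc n)
  then show ?case using fv_nd[of n n] by auto
qed

lemma fv_exs: "fv (exs m \<phi>) = fv \<phi> - {..<m}"
  by (induction m) (auto simp: lessThan_Suc)

lemma wf_nd: "wf_fm \<sigma> (nd k j)" by (induction j) auto
lemma wf_alld: "wf_fm \<sigma> (alld n)" by (induction n) (auto simp: wf_nd)
lemma wf_exs: "wf_fm \<sigma> (exs m \<phi>) = wf_fm \<sigma> \<phi>" by (induction m) auto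

lemma sat_exs: "sat M e (exs m \<phi>) \<longleftrightarrow>
   (\<exists>f. (\<forall>i<m. f i \<in> univ M) \<and> sat M (\<lambda>v. if v < m then f v else e v) \<phi>)"
proof (induction m arbitrary: e)
  case 0 then show ?case by simp
next
  case (Suc m)
  have "sat M e (exs (Suc m) \<phi>) \<longleftrightarrow> (\<exists>a\<in>univ M. \<exists>f. (\<forall>i<m. f i \<in> univ M) \<and>
          sat M (\<lambda>v. if v < m then f v else (e(m:=a)) v) \<phi>)"
    by (simp add: Suc.IH)
  also have "\<dots> \<longleftrightarrow> (\<exists>f. (\<forall>i<Suc m. f i \<in> univ M) \<and> sat M (\<lambda>v. if v < Suc m then f v else e v) \<phi>)"
  proof
    assume "\<exists>a\<in>univ M. \<exists>f. (\<forall>i<m. f i \<in> univ M) \<and> sat M (\<lambda>v. if v < m then f v else (e(m:=a)) v) \<phi>"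
    then obtain a f where a: "a \<in> univ M" "\<forall>i<m. f i \<in> univ M"
      "sat M (\<lambda>v. if v < m then f v else (e(m:=a)) v) \<phi>" by blast
    have eq: "(\<lambda>v. if v < m then f v else (e(m:=a)) v) = (\<lambda>v. if v < Suc m then (f(m:=a)) v else e v)"
      by (rule ext) auto
    show "\<exists>f. (\<forall>i<Suc m. f i \<in> univ M) \<and> sat M (\<lambda>v. if v < Suc m then f v else e v) \<phi>"
      using a eq by (intro exI[of _ "f(m:=a)"]) (auto simp: less_Suc_eq)
  next
    assume "\<exists>f. (\<forall>i<Suc m. f i \<in> univ M) \<and> sat M (\<lambda>v. if v < Suc m then f v else e v) \<phi>"
    then obtain f where f: "\<forall>i<Suc m. f i \<in> univ M" "sat M (\<lambda>v. if v < Suc m then f v else e v) \<phi>"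
      by blast
    have eq: "(\<lambda>v. if v < Suc m then f v else e v) = (\<lambda>v. if v < m then f v else (e(m:=f m)) v)"
      by (rule ext) (auto simp: less_Suc_eq)
    show "\<exists>a\<in>univ M. \<exists>f. (\<forall>i<m. f i \<in> univ M) \<and> sat M (\<lambda>v. if v < m then f v else (e(m:=a)) v) \<phi>"
      using f eq by (intro bexI[of _ "f m"] exI[of _ f]) auto
  qed
  finally show ?case .
qed

definition D :: "nat \<Rightarrow> fm" where "D n = exs (Suc n) (alld n)"

lemma D_sentence: "sentence \<sigma> (D n)"
  unfolding sentence_def D_def using fv_alld[of n]
  by (auto simp: wf_exs wf_alld fv_exs)

lemma D_B0: "holds B0 (D n)"
  unfolding holds_def D_def
  by (auto simp: sat_exs sat_alld B0_def intro!: exI[of _ id])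

lemma D_inf:
  fixes M :: "'a struc"
  assumes "\<forall>n. holds M (D n)" "univ M \<noteq> {}"
  shows "infinite (univ M)"
proof
  assume fin: "finite (univ M)"
  obtain m0 where m0: "m0 \<in> univ M" using assms(2) by auto
  define n where "n = Suc (card (univ M))"
  have "sat M (\<lambda>_. m0) (D n)" using assms(1) m0 unfolding holds_def by auto
  then obtain f where f: "\<forall>i<Suc n. f i \<in> univ M"
     "sat M (\<lambda>v. if v < Suc n then f v else m0) (alld n)"
    unfolding D_def sat_exs by blast
  have "\<forall>k<n. \<forall>i<k. f k \<noteq> f i" using f(2) unfolding sat_alld by auto
  then have "inj_on f {..<n}" unfolding inj_on_def by (metis lessThan_iff nat_neq_iff)
  moreover have "f ` {..<n} \<subseteq> univ M" using f(1) by auto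
  ultimately have "card {..<n} \<le> card (univ M)"
    using card_inj_on_le fin by blast
  then show False unfolding n_def by simp
qed

definition S1 where "S1 = All 0 (Atom 0 [0,0])"
definition S2 where "S2 = All 0 (Ex 1 (Neg (Atom 0 [0,1])))"
definition S3 where "S3 = All 0 (All 1 (All 2 (Disj (Atom 0 [0,1]) (Disj (Atom 0 [0,2]) (Eq 1 2)))))"
definition S4 where "S4 = All 0 (All 1 (Disj (Atom 0 [0,1]) (Neg (Atom 0 [1,0]))))"

lemma S_sentences: "sentence sig0 S1" "sentence sig0 S2" "sentence sig0 S3" "sentence sig0 S4"
  unfolding sentence_def S1_def S2_def S3_def S4_def sig0_def by auto

lemma arith3: "(x::nat) div 2 = y div 2 \<Longrightarrow> x div 2 = z div 2 \<Longrightarrow> x \<noteq> y \<Longrightarrow> x \<noteq> z \<Longrightarrow> y = z"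
proof -
  assume a: "x div 2 = y div 2" "x div 2 = z div 2" "x \<noteq> y" "x \<noteq> z"
  have e: "x = 2*(x div 2) + x mod 2" "y = 2*(y div 2) + y mod 2" "z = 2*(z div 2) + z mod 2" by simp_all
  have l: "x mod 2 < 2" "y mod 2 < 2" "z mod 2 < 2" by simp_all
  have "x mod 2 \<noteq> y mod 2" "x mod 2 \<noteq> z mod 2" using a e by metis+
  then have "y mod 2 = z mod 2" using l by linarith
  then show "y = z" using a e by metis
qed

lemma S_B0: "holds B0 S1" "holds B0 S2" "holds B0 S3" "holds B0 S4"
proof -
  show "holds B0 S1" unfolding holds_def S1_def B0_def by simp
  have "\<forall>a::nat. \<exists>aa. a \<noteq> aa \<and> a div 2 = aa div 2" using partner by blast
  then show "holds B0 S2" unfolding holds_def S2_def B0_def by simp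
  have "\<forall>(a::nat) aa ab. a div 2 = ab div 2 \<longrightarrow> ab div 2 = aa div 2 \<longrightarrow> a = aa \<or> a = ab \<or> aa = ab"
    using arith3 by metis
  then show "holds B0 S3" unfolding holds_def S3_def B0_def by simp
  show "holds B0 S4" unfolding holds_def S4_def B0_def by (simp, blast)
qed

lemma parity_div: "(m::nat) div 2 = n div 2 \<Longrightarrow> even m = even n \<Longrightarrow> m = n"
proof -
  assume a: "m div 2 = n div 2" "even m = even n"
  have "m mod 2 = n mod 2" using a(2) by (metis odd_iff_mod_2_eq_one even_iff_mod_2_eq_zero)
  then show "m = n" using a(1) by (metis div_mult_mod_eq)
qed

lemma iso_lemma:
  fixes M :: "nat struc"
  assumes st: "is_struc sig0 M" and inf: "infinite (univ M)"
    and loop: "\<forall>x\<in>univ M. rel M 0 [x,x]"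
    and ex: "\<forall>x\<in>univ M. \<exists>z\<in>univ M. \<not> rel M 0 [x,z]"
    and uq: "\<forall>x\<in>univ M. \<forall>y\<in>univ M. \<forall>z\<in>univ M. rel M 0 [x,y] \<or> rel M 0 [x,z] \<or> y = z"
    and sym: "\<forall>x\<in>univ M. \<forall>y\<in>univ M. rel M 0 [x,y] \<or> \<not> rel M 0 [y,x]"
  shows "iso sig0 M B0"
proof -
  define U where "U = univ M"
  define p where "p x = (THE z. z \<in> U \<and> \<not> rel M 0 [x,z])" for x
  have p1: "p x \<in> U \<and> \<not> rel M 0 [x, p x]" if xU: "x \<in> U" for x
  proof -
    obtain z where z: "z \<in> U" "\<not> rel M 0 [x,z]" using ex xU U_def by auto
    have "p x = z" unfolding p_def
    proof (rule the_equality)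
      show "z \<in> U \<and> \<not> rel M 0 [x, z]" using z by simp
    next
      fix w assume "w \<in> U \<and> \<not> rel M 0 [x, w]"
      then show "w = z" using uq z xU unfolding U_def by blast
    qed
    then show ?thesis using z by simp
  qed
  have p2: "z = p x" if "x \<in> U" "z \<in> U" "\<not> rel M 0 [x,z]" for x z
    using p1[OF that(1)] uq that unfolding U_def by blast
  have pne: "p x \<noteq> x" if "x \<in> U" for x
    using p1[OF that] loop that unfolding U_def by auto
  have pp: "p (p x) = x" if "x \<in> U" for x
  proof -
    have px: "p x \<in> U" "\<not> rel M 0 [x, p x]" using p1[OF that] by auto
    then have "\<not> rel M 0 [p x, x]" using sym that unfolding U_def by blast
    then show ?thesis using p2[OF px(1) that] by simp
  qed
  have relp: "rel M 0 [x,y] \<longleftrightarrow> y \<noteq> p x" if "x \<in> U" "y \<in> U" for x y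
    using p1[OF that(1)] p2[OF that] by auto
  define S where "S = {x\<in>U. x < p x}"
  have SU: "S \<subseteq> U" unfolding S_def by auto
  have pS: "p x \<notin> S" if "x \<in> S" for x
  proof
    assume "p x \<in> S"
    then have "p x < p (p x)" unfolding S_def by auto
    then have "p x < x" using pp that SU by auto
    then show False using that unfolding S_def by auto
  qed
  have US: "U \<subseteq> S \<union> p ` S"
  proof
    fix x assume x: "x \<in> U"
    show "x \<in> S \<union> p ` S"
    proof (cases "x < p x")
      case True then show ?thesis using x unfolding S_def by auto
    next
      case False
      then have "p x < x" using pne[OF x] by auto
      then have "p x \<in> S" using pp[OF x] p1[OF x] unfolding S_def by auto
      moreover have "x = p (p x)" using pp[OF x] by simp
      ultimately show ?thesis by blast
    qed
  qed
  have infS: "infinite S"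
  proof
    assume "finite S"
    then have "finite (S \<union> p ` S)" by simp
    then have "finite U" using US finite_subset by blast
    then show False using inf unfolding U_def by simp
  qed
  define en where "en = enumerate S"
  have enS: "en n \<in> S" for n unfolding en_def using enumerate_in_set[OF infS] .
  have eninj: "en m = en n \<longleftrightarrow> m = n" for m n
    using inj_enumerate[OF infS] unfolding en_def inj_def by blast
  have ensurj: "\<exists>n. en n = s" if "s \<in> S" for s
    using enumerate_Ex[OF infS that] unfolding en_def .
  define k where "k n = (if even n then en (n div 2) else p (en (n div 2)))" for n
  have kU: "k n \<in> U" for n
    unfolding k_def using enS SU p1 by auto
  have key: "k n = p (k m) \<longleftrightarrow> (m \<noteq> n \<and> m div 2 = n div 2)" for m n
  proof -
    define s where "s = en (m div 2)"
    define t where "t = en (n div 2)"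
    have s: "s \<in> S" "s \<in> U" and t: "t \<in> S" "t \<in> U" unfolding s_def t_def using enS SU by auto
    have st: "s = t \<longleftrightarrow> m div 2 = n div 2" unfolding s_def t_def using eninj by simp
    have pinj: "p s = p t \<longleftrightarrow> s = t" using pp s t by metis
    show ?thesis
    proof (cases "even m"; cases "even n")
      assume "even m" "even n"
      then have "k n = t" "p (k m) = p s" unfolding k_def s_def t_def by auto
      moreover have "t \<noteq> p s" using pS[OF s(1)] t by auto
      moreover have "\<not> (m \<noteq> n \<and> m div 2 = n div 2)" using parity_div \<open>even m\<close> \<open>even n\<close> by blast
      ultimately show ?thesis by simp
    next
      assume "even m" "odd n"
      then have "k n = p t" "p (k m) = p s" unfolding k_def s_def t_def by auto
      moreover have "m \<noteq> n" using \<open>even m\<close> \<open>odd n\<close> by auto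
      ultimately show ?thesis using pinj st by auto
    next
      assume "odd m" "even n"
      then have "k n = t" "k m = p s" unfolding k_def s_def t_def by auto
      then have "k n = t" "p (k m) = s" using pp[OF s(2)] by auto
      moreover have "m \<noteq> n" using \<open>odd m\<close> \<open>even n\<close> by auto
      ultimately show ?thesis using st by auto
    next
      assume "odd m" "odd n"
      then have "k n = p t" "k m = p s" unfolding k_def s_def t_def by auto
      then have "k n = p t" "p (k m) = s" using pp[OF s(2)] by auto
      moreover have "p t \<noteq> s" using pS[OF t(1)] s by auto
      moreover have "\<not> (m \<noteq> n \<and> m div 2 = n div 2)" using parity_div \<open>odd m\<close> \<open>odd n\<close> by blast
      ultimately show ?thesis by simp
    qed
  qed
  have kinj: "inj k"
  proof (rule injI)
    fix m n assume kmn: "k m = k n"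
    have "k m \<noteq> p (k m)" using pne kU by metis
    then have "\<not> (m \<noteq> m \<and> m div 2 = m div 2)" by simp
    have "k n \<noteq> p (k m)" using kmn pne kU by metis
    then have h1: "\<not> (m \<noteq> n \<and> m div 2 = n div 2)" using key by simp
    show "m = n"
    proof (rule ccontr)
      assume mn: "m \<noteq> n"
      then have d: "m div 2 \<noteq> n div 2" using h1 by simp
      define s where "s = en (m div 2)"
      define t where "t = en (n div 2)"
      have s: "s \<in> S" "s \<in> U" and t: "t \<in> S" "t \<in> U" unfolding s_def t_def using enS SU by auto
      have st: "s \<noteq> t" unfolding s_def t_def using eninj d by simp
      have "k m \<in> {s, p s}" "k n \<in> {t, p t}" unfolding k_def s_def t_def by auto
      moreover have "p s \<noteq> p t" using st pp s t by metis
      moreover have "s \<noteq> p t" "p s \<noteq> t" using pS s t by auto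
      ultimately show False using kmn st by auto
    qed
  qed
  have krange: "range k = U"
  proof
    show "range k \<subseteq> U" using kU by auto
  next
    show "U \<subseteq> range k"
    proof
      fix x assume x: "x \<in> U"
      then have "x \<in> S \<union> p ` S" using US by auto
      then show "x \<in> range k"
      proof
        assume "x \<in> S"
        then obtain j where "en j = x" using ensurj by blast
        then have "k (2*j) = x" unfolding k_def by simp
        then show ?thesis by (metis rangeI)
      next
        assume "x \<in> p ` S"
        then obtain s where s: "s \<in> S" "x = p s" by auto
        then obtain j where "en j = s" using ensurj by blast
        then have "k (2*j+1) = x" unfolding k_def using s by simp
        then show ?thesis by (metis rangeI)
      qed
    qed
  qed
  have kbij: "bij_betw k UNIV U" using kinj krange unfolding bij_betw_def by simp
  define h where "h = inv_into UNIV k"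
  have hbij: "bij_betw h U UNIV" unfolding h_def using bij_betw_inv_into[OF kbij] .
  have hk: "k (h x) = x" if "x \<in> U" for x
    unfolding h_def using that krange by (metis f_inv_into_f)
  show ?thesis
    unfolding iso_def
  proof (intro exI[of _ h] conjI allI impI)
    show "bij_betw h (univ M) (univ B0)" using hbij unfolding U_def B0_def by simp
  next
    fix r n xs assume r: "sig0 r = Some n" and len: "length xs = n" and xsU: "set xs \<subseteq> univ M"
    have r0: "r = 0" and n2: "n = 2" using r unfolding sig0_def by (auto split: if_splits)
    obtain x y where xs: "xs = [x,y]" using len n2
      by (metis (no_types, opaque_lifting) One_nat_def Suc_length_conv add_diff_cancel_left'
          length_0_conv numeral_2_eq_2 plus_1_eq_Suc)
    have xy: "x \<in> U" "y \<in> U" using xsU xs U_def by auto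
    have "rel M 0 [x,y] \<longleftrightarrow> y \<noteq> p x" using relp xy by simp
    also have "\<dots> \<longleftrightarrow> k (h y) \<noteq> p (k (h x))" using hk xy by simp
    also have "\<dots> \<longleftrightarrow> \<not> (h x \<noteq> h y \<and> h x div 2 = h y div 2)" using key by simp
    also have "\<dots> \<longleftrightarrow> rel B0 0 [h x, h y]" unfolding B0_def by auto
    finally show "rel M r xs = rel B0 r (map h xs)" unfolding xs r0 by simp
  qed
qed

lemma holds_sat:
  fixes M :: "'a struc"
  assumes "holds M \<phi>" "m0 \<in> univ M"
  shows "sat M (\<lambda>_. m0) \<phi>"
  using assms unfolding holds_def by auto

lemma omega_B0: "omega_categorical sig0 B0"
  unfolding omega_categorical_def
proof (intro conjI allI impI)
  show "is_struc sig0 B0" unfolding is_struc_def B0_def sig0_def by auto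
  show "countable (univ B0)" unfolding B0_def by simp
  show "infinite (univ B0)" unfolding B0_def by simp
next
  fix M :: "nat struc"
  assume "is_struc sig0 M \<and> (\<forall>\<phi>. sentence sig0 \<phi> \<longrightarrow> holds B0 \<phi> \<longrightarrow> holds M \<phi>)"
  then have st: "is_struc sig0 M" and th: "\<And>\<phi>. sentence sig0 \<phi> \<Longrightarrow> holds B0 \<phi> \<Longrightarrow> holds M \<phi>"
    by auto
  have ne: "univ M \<noteq> {}" using st unfolding is_struc_def by simp
  then obtain m0 where m0: "m0 \<in> univ M" by auto
  have "\<forall>n. holds M (D n)" using th D_sentence D_B0 by blast
  then have inf: "infinite (univ M)" using D_inf ne by blast
  have h1: "sat M (\<lambda>_. m0) S1" using holds_sat[OF th[OF S_sentences(1) S_B0(1)] m0] .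
  have h2: "sat M (\<lambda>_. m0) S2" using holds_sat[OF th[OF S_sentences(2) S_B0(2)] m0] .
  have h3: "sat M (\<lambda>_. m0) S3" using holds_sat[OF th[OF S_sentences(3) S_B0(3)] m0] .
  have h4: "sat M (\<lambda>_. m0) S4" using holds_sat[OF th[OF S_sentences(4) S_B0(4)] m0] .
  show "iso sig0 M B0"
  proof (rule iso_lemma[OF st inf])
    show "\<forall>x\<in>univ M. rel M 0 [x,x]" using h1 unfolding S1_def by simp
    show "\<forall>x\<in>univ M. \<exists>z\<in>univ M. \<not> rel M 0 [x,z]" using h2 unfolding S2_def by simp
    show "\<forall>x\<in>univ M. \<forall>y\<in>univ M. \<forall>z\<in>univ M. rel M 0 [x,y] \<or> rel M 0 [x,z] \<or> y = z"
      using h3 unfolding S3_def by simp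
    show "\<forall>x\<in>univ M. \<forall>y\<in>univ M. rel M 0 [x,y] \<or> \<not> rel M 0 [y,x]"
      using h4 unfolding S4_def by simp
  qed
qed

theorem mainTheorem3:
  shows "\<exists>(\<sigma> :: signature) (A :: nat struc) (B :: nat struc).
           finite (dom \<sigma>) \<and>
           is_struc \<sigma> A \<and> finite (univ A) \<and>
           omega_categorical \<sigma> B \<and>
           Pi2_CSP \<sigma> A \<subseteq> Pi2_CSP \<sigma> B \<and>
           \<not> QCSP \<sigma> A \<subseteq> QCSP \<sigma> B"
proof (intro exI conjI)
  show "finite (dom sig0)" unfolding sig0_def dom_def by simp
  show "is_struc sig0 A0" unfolding is_struc_def A0_def sig0_def by auto
  show "finite (univ A0)" unfolding A0_def by simp
  show "omega_categorical sig0 B0" by (rule omega_B0)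
  show "Pi2_CSP sig0 A0 \<subseteq> Pi2_CSP sig0 B0" by (rule pi2_incl)
  show "\<not> QCSP sig0 A0 \<subseteq> QCSP sig0 B0" by (rule qcsp_not)
qed

end
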